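(* Let $D$ be a strongly connected digraph of order $n\ge 2$ and girth $g$. Then $\chi_A(D)\le \left\lceil\frac{n}{g-1}\right\rceil$.
   Context: Digraphs are finite and loopless; cycles are directed. Girth is the length of a shortest directed cycle. $\chi_A(D)$ is the minimum number of colors in a vertex coloring of $D$ in which every color class induces an acyclic subdigraph. *)

theory Defs
  imports Complex_Main
begin

definition digraph :: "'a set \<Rightarrow> ('a \<times> 'a) set \<Rightarrow> bool" where
  "digraph V E \<longleftrightarrow> finite V \<and> E \<subseteq> V \<times> V \<and> (\<forall>v. (v, v) \<notin> E)"

definition strongly_connected :: "'a set \<Rightarrow> ('a \<times> 'a) set \<Rightarrow> bool" where
  "strongly_connected V E \<longleftrightarrow> (\<forall>u\<in>V. \<forall>v\<in>V. (u, v) \<in> E\<^sup>*)"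

definition is_dicycle :: "('a \<times> 'a) set \<Rightarrow> 'a list \<Rightarrow> bool" where
  "is_dicycle E cs \<longleftrightarrow> cs \<noteq> [] \<and> distinct cs \<and>
     (\<forall>i < length cs. (cs ! i, cs ! ((i + 1) mod length cs)) \<in> E)"

definition girth :: "('a \<times> 'a) set \<Rightarrow> nat" where
  "girth E = (LEAST k. \<exists>cs. is_dicycle E cs \<and> length cs = k)"

definition acyclic_coloring :: "'a set \<Rightarrow> ('a \<times> 'a) set \<Rightarrow> nat \<Rightarrow> ('a \<Rightarrow> nat) \<Rightarrow> bool" where
  "acyclic_coloring V E k c \<longleftrightarrow> c ` V \<subseteq> {..<k} \<and>
     (\<forall>i < k. acyclic (E \<inter> ({v\<in>V. c v = i} \<times> {v\<in>V. c v = i})))"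

definition dichromatic_number :: "'a set \<Rightarrow> ('a \<times> 'a) set \<Rightarrow> nat" where
  "dichromatic_number V E = (LEAST k. \<exists>c. acyclic_coloring V E k c)"

end

theory Submission
  imports Defs
begin

lemma walk_seg:
  assumes "\<forall>i<k. (f i, f (Suc i)) \<in> R" "i \<le> j" "j \<le> k"
  shows "(f i, f j) \<in> R ^^ (j - i)"
  using assms(2,3)
proof (induction j)
  case 0 then show ?case by simp
next
  case (Suc j)
  show ?case
  proof (cases "i = Suc j")
    case True then show ?thesis by simp
  next
    case False
    then have "i \<le> j" using Suc.prems by simp
    then have "(f i, f j) \<in> R ^^ (j - i)" using Suc by simp
    moreover have "(f j, f (Suc j)) \<in> R" using assms(1) Suc.prems by simp
    ultimately have "(f i, f (Suc j)) \<in> R ^^ Suc (j - i)" by auto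
    moreover have "Suc (j - i) = Suc j - i" using \<open>i \<le> j\<close> by simp
    ultimately show ?thesis by simp
  qed
qed

lemma cycle_exists:
  assumes "(x, x) \<in> R\<^sup>+"
  shows "\<exists>cs. is_dicycle R cs"
proof -
  define P where "P k \<longleftrightarrow> k > 0 \<and> (\<exists>y. (y, y) \<in> R ^^ k)" for k
  have "\<exists>k. P k" using assms trancl_power unfolding P_def by blast
  define k where "k = (LEAST k. P k)"
  have Pk: "P k" unfolding k_def using \<open>\<exists>k. P k\<close> by (metis LeastI)
  have minK: "\<And>m. P m \<Longrightarrow> k \<le> m" unfolding k_def by (rule Least_le)
  obtain y where y: "(y, y) \<in> R ^^ k" and k0: "k > 0" using Pk P_def by blast
  obtain f where f0: "f 0 = y" and fk: "f k = y" and fs: "\<forall>i<k. (f i, f (Suc i)) \<in> R"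
    using y relpow_fun_conv by metis
  define cs where "cs = map f [0..<k]"
  have "distinct cs"
    unfolding cs_def distinct_map
  proof (intro conjI)
    show "distinct [0..<k]" by simp
    show "inj_on f (set [0..<k])"
    proof (rule inj_onI, rule ccontr)
      fix a b assume ab: "a \<in> set [0..<k]" "b \<in> set [0..<k]" "f a = f b" "a \<noteq> b"
      have "\<exists>i j. i < j \<and> j < k \<and> f i = f j"
        using ab by (metis atLeastLessThan_iff linorder_neqE_nat set_upt)
      then obtain i j where ij: "i < j" "j < k" "f i = f j" by blast
      have "(f j, f k) \<in> R ^^ (k - j)" using walk_seg[OF fs, of j k] ij by simp
      moreover have "(f 0, f i) \<in> R ^^ (i - 0)" using walk_seg[OF fs, of 0 i] ij by simp
      ultimately have "(f j, f i) \<in> R ^^ (k - j) O R ^^ i" using fk f0 by auto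
      then have "(f j, f j) \<in> R ^^ (k - j + i)" using ij by (simp only: relpow_add)
      then have "P (k - j + i)" unfolding P_def using ij by auto
      then show False using minK ij by fastforce
    qed
  qed
  moreover have "cs \<noteq> []" using k0 cs_def by simp
  moreover have "\<forall>i < length cs. (cs ! i, cs ! ((i + 1) mod length cs)) \<in> R"
  proof (intro allI impI)
    fix i assume i: "i < length cs"
    then have ik: "i < k" by (simp add: cs_def)
    show "(cs ! i, cs ! ((i + 1) mod length cs)) \<in> R"
    proof (cases "i + 1 < k")
      case True then show ?thesis using fs ik by (simp add: cs_def)
    next
      case False
      then have "i + 1 = k" using ik by simp
      then have "(f i, f k) \<in> R" using fs ik by (metis Suc_eq_plus1)
      then show ?thesis using \<open>i + 1 = k\<close> ik fk f0 k0 by (simp add: cs_def)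
    qed
  qed
  ultimately show ?thesis unfolding is_dicycle_def by blast
qed

lemma small_acyclic:
  assumes cyc: "\<exists>cs. is_dicycle E cs" and S: "finite S" "card S < girth E"
  shows "acyclic (E \<inter> (S \<times> S))"
proof (rule ccontr)
  assume "\<not> acyclic (E \<inter> (S \<times> S))"
  then have "\<exists>x. (x, x) \<in> (E \<inter> (S \<times> S))\<^sup>+" unfolding acyclic_def by (simp only: not_all not_not)
  then obtain x where "(x, x) \<in> (E \<inter> (S \<times> S))\<^sup>+" ..
  from cycle_exists[OF this] obtain cs where cs: "is_dicycle (E \<inter> (S \<times> S)) cs" ..
  have cE: "is_dicycle E cs" using cs unfolding is_dicycle_def by simp
  have sub: "set cs \<subseteq> S"
  proof
    fix v assume "v \<in> set cs"
    then obtain i where i: "i < length cs" "cs ! i = v" by (metis in_set_conv_nth)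
    have "(cs ! i, cs ! ((i + 1) mod length cs)) \<in> E \<inter> (S \<times> S)"
      using cs i(1) unfolding is_dicycle_def by blast
    then show "v \<in> S" using i(2) by simp
  qed
  have "length cs = card (set cs)" using cs unfolding is_dicycle_def by (simp add: distinct_card)
  also have "\<dots> \<le> card S" using card_mono[OF S(1) sub] .
  finally have "length cs < girth E" using S by simp
  moreover have "girth E \<le> length cs" unfolding girth_def by (rule Least_le) (use cE in blast)
  ultimately show False by simp
qed

theorem mainTheorem17:
  fixes V :: "'a set" and E :: "('a \<times> 'a) set"
  assumes "digraph V E"
    and "strongly_connected V E"
    and "card V \<ge> 2"
  shows "int (dichromatic_number V E) \<le> \<lceil>real (card V) / real (girth E - 1)\<rceil>"
proof -
  have fin: "finite V" and EV: "E \<subseteq> V \<times> V" and loop: "\<And>v. (v, v) \<notin> E"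
    using assms(1) unfolding digraph_def by auto
  have "V \<noteq> {}" using assms(3) by auto
  then obtain u where u: "u \<in> V" by blast
  have "card (V - {u}) \<ge> 1" using assms(3) u fin by simp
  then have "V - {u} \<noteq> {}" by (metis card.empty not_one_le_zero)
  then obtain v where v: "v \<in> V - {u}" by blast
  have uv: "u \<in> V" "v \<in> V" "u \<noteq> v" using u v by auto
  have "(u, v) \<in> E\<^sup>*" "(v, u) \<in> E\<^sup>*" using assms(2) uv unfolding strongly_connected_def by auto
  then have "(u, v) \<in> E\<^sup>+" "(v, u) \<in> E\<^sup>+" using uv(3) by (auto simp: rtrancl_eq_or_trancl)
  then have "(u, u) \<in> E\<^sup>+" by simp
  then have cyc: "\<exists>cs. is_dicycle E cs" by (rule cycle_exists)
  then obtain cs0 where cs0: "is_dicycle E cs0" by blast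
  have g2: "girth E \<ge> 2"
  proof -
    have "\<exists>cs. is_dicycle E cs \<and> length cs = girth E"
      unfolding girth_def by (rule LeastI_ex) (use cs0 in blast)
    then obtain cs where cs: "is_dicycle E cs" "length cs = girth E" by blast
    show ?thesis
    proof (rule ccontr)
      assume "\<not> 2 \<le> girth E"
      moreover have "cs \<noteq> []" using cs unfolding is_dicycle_def by blast
      ultimately have "length cs = 1" using cs by (cases cs) auto
      then have "(cs ! 0, cs ! 0) \<in> E" using cs(1) unfolding is_dicycle_def by force
      then show False using loop by blast
    qed
  qed
  define d where "d = girth E - 1"
  have d0: "d > 0" using g2 d_def by simp
  define n where "n = card V"
  obtain h where h: "bij_betw h V {0..<n}" using ex_bij_betw_finite_nat[OF fin] n_def by blast
  define k where "k = nat \<lceil>real n / real d\<rceil>"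
  define c where "c w = h w div d" for w
  have col: "acyclic_coloring V E k c"
    unfolding acyclic_coloring_def
  proof (intro conjI allI impI)
    show "c ` V \<subseteq> {..<k}"
    proof
      fix x assume "x \<in> c ` V"
      then obtain w where w: "w \<in> V" "x = c w" by blast
      have hw: "h w < n" using bij_betw_apply[OF h w(1)] by simp
      have "x * d \<le> h w" using w c_def by simp
      then have "x * d < n" using hw by (rule le_less_trans)
      then have "real (x * d) < real n" by (simp only: of_nat_less_iff)
      then have "real x * real d < real n" by (simp only: of_nat_mult)
      then have "real x < real n / real d" using d0 by (simp add: field_simps)
      then have "int x < \<lceil>real n / real d\<rceil>" unfolding less_ceiling_iff by simp
      then show "x \<in> {..<k}" unfolding k_def by simp
    qed
  next
    fix i assume "i < k"
    let ?S = "{w \<in> V. c w = i}"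
    have "h ` ?S \<subseteq> {i*d..<i*d+d}"
    proof
      fix y assume "y \<in> h ` ?S"
      then obtain w where w: "w \<in> V" "h w div d = i" "y = h w" unfolding c_def by blast
      have e: "h w = i*d + h w mod d" using w(2) div_mult_mod_eq[of "h w" d] by simp
      have "h w mod d < d" using d0 by simp
      then show "y \<in> {i*d..<i*d+d}" using e w(3) by simp
    qed
    moreover have "inj_on h ?S" using h unfolding bij_betw_def by (rule conjE) (erule inj_on_subset, blast)
    ultimately have "card ?S \<le> d" using card_inj_on_le[of h ?S "{i*d..<i*d+d}"] by simp
    then have "card ?S < girth E" using d_def g2 by simp
    then show "acyclic (E \<inter> (?S \<times> ?S))" using small_acyclic[OF cyc] fin by simp
  qed
  have nn: "real n / real d \<ge> 0" by simp
  have c0: "0 \<le> \<lceil>real n / real d\<rceil>" unfolding zero_le_ceiling using nn by linarith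
  have ik: "int k = \<lceil>real n / real d\<rceil>" unfolding k_def using c0 by simp
  from col have "dichromatic_number V E \<le> k" unfolding dichromatic_number_def using col by (intro Least_le) (rule exI)
  then show ?thesis using ik n_def d_def by simp
qed

end
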